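(* For every $n\ge 0$, the numbers of classes of each type satisfy \begin{align*} |\overline{t}_n^{\mathcal{S}_2}| &= |t_n^{\mathcal{S}_2}| - \sum_{m=0}^{n-1}\alpha_{n,m}|\overline{t}_m^{\mathcal{S}_2}|,\\ |\overline{t}_n^{\langle r\rangle}| &= |t_n^{\langle r\rangle}| - \sum_{m=0}^{n-1}\alpha_{n,m}|\overline{t}_m^{\langle r\rangle}|,\\ |\overline{t}_n^{\langle rc\rangle}| &= |t_n^{\langle rc\rangle}| - \sum_{m=0}^{n-1}\alpha_{n,m}|\overline{t}_m^{\langle rc\rangle}|,\\ |\overline{t}_n^{\langle c\rangle}| &= |t_n^{\langle c\rangle}| - \sum_{m=0}^{n-1}\Big[\binom{n}{m}|\overline{t}_m^{\langle c\rangle}| + \tfrac12\beta_{n,m}|\overline{t}_m^{\mathcal{S}_2}|\Big],\\ |\overline{t}_n^{\langle 1\rangle}| &= |t_n^{\langle 1\rangle}| - \sum_{m=0}^{n-1}\Big[\binom{n}{m}|\overline{t}_m^{\langle 1\rangle}| + \tfrac12\beta_{n,m}\big(|\overline{t}_m^{\langle r\rangle}|+|\overline{t}_m^{\langle rc\rangle}|\big)\Big]. \end{align*}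
   Context: Binary setting: $\mathcal{A}=\{0,1\}$, $L_2(n)$ is the set of all $f:\{0,1\}^n\to\{0,1\}$ and $\overline{L}_2(n)\subseteq L_2(n)$ the irreducible ones (those depending on every argument: for each index $j$ some change of only the $j$-th input letter changes the output). Let $c$ be the transposition $0\leftrightarrow1$ applied letterwise to words, and $r$ the reversal of words, $r(a_1\dots a_n)=a_n\dots a_1$. Operators on rules: $\hat{c}f(w)=c\,f(c\,w)$, $\hat{r}f(w)=f(rw)$, $\widehat{rc}=\hat r\hat c$. The group $\mathcal{S}_2=\{1,r,c,rc\}$ (Klein four-group) acts on $L_2(n)$ and on $\overline{L}_2(n)$ in this way; $[f]$ denotes the orbit of $f$ and $\mathrm{stab}(f)=\{\alpha\in\mathcal{S}_2\mid\hat\alpha f=f\}$ (constant on orbits since the group is abelian). For a subgroup $U\le\mathcal{S}_2$ (i.e. $\langle 1\rangle,\langle r\rangle,\langle c\rangle,\langle rc\rangle,\mathcal{S}_2$), put $t_n^U=\{[f]\in L_2(n)/\mathcal{S}_2\mid \mathrm{stab}(f)=U\}$ and $\overline{t}_n^U=\{[f]\in\overline{L}_2(n)/\mathcal{S}_2\mid\mathrm{stab}(f)=U\}$. For $n\ge m\ge0$: $\alpha_{n,m}=0$ if $n$ is even and $m$ is odd, and $\alpha_{n,m}=\binom{\lfloor n/2\rfloor}{\lfloor m/2\rfloor}$ otherwise; $\beta_{n,m}=\binom{n}{m}-\alpha_{n,m}$. *)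

theory Defs
  imports Complex_Main
begin

text \<open>Words of length n over {0,1} are bool lists of length n (False = 0, True = 1).
  A rule f : {0,1}^n -> {0,1} is represented extensionally as a function
  bool list => bool that is False outside words of length n.\<close>

definition L2 :: "nat \<Rightarrow> (bool list \<Rightarrow> bool) set" where
  "L2 n = {f. \<forall>w. length w \<noteq> n \<longrightarrow> f w = False}"

definition irreducible_rule :: "nat \<Rightarrow> (bool list \<Rightarrow> bool) \<Rightarrow> bool" where
  "irreducible_rule n f \<longleftrightarrow>
     (\<forall>j<n. \<exists>w. length w = n \<and> f (w[j := \<not> w ! j]) \<noteq> f w)"

definition L2bar :: "nat \<Rightarrow> (bool list \<Rightarrow> bool) set" where
  "L2bar n = {f \<in> L2 n. irreducible_rule n f}"

definition cw :: "bool list \<Rightarrow> bool list" where "cw w = map Not w"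
definition rw :: "bool list \<Rightarrow> bool list" where "rw w = rev w"

datatype S2 = S2_1 | S2_r | S2_c | S2_rc

definition hat_c :: "nat \<Rightarrow> (bool list \<Rightarrow> bool) \<Rightarrow> (bool list \<Rightarrow> bool)" where
  "hat_c n f = (\<lambda>w. if length w = n then \<not> f (cw w) else False)"
definition hat_r :: "nat \<Rightarrow> (bool list \<Rightarrow> bool) \<Rightarrow> (bool list \<Rightarrow> bool)" where
  "hat_r n f = (\<lambda>w. if length w = n then f (rw w) else False)"

fun act :: "nat \<Rightarrow> S2 \<Rightarrow> (bool list \<Rightarrow> bool) \<Rightarrow> (bool list \<Rightarrow> bool)" where
  "act n S2_1 f = f"
| "act n S2_r f = hat_r n f"
| "act n S2_c f = hat_c n f"
| "act n S2_rc f = hat_r n (hat_c n f)"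

definition orbit :: "nat \<Rightarrow> (bool list \<Rightarrow> bool) \<Rightarrow> (bool list \<Rightarrow> bool) set" where
  "orbit n f = {act n a f | a. True}"

definition stab :: "nat \<Rightarrow> (bool list \<Rightarrow> bool) \<Rightarrow> S2 set" where
  "stab n f = {a. act n a f = f}"

definition U_1 :: "S2 set" where "U_1 = {S2_1}"
definition U_r :: "S2 set" where "U_r = {S2_1, S2_r}"
definition U_c :: "S2 set" where "U_c = {S2_1, S2_c}"
definition U_rc :: "S2 set" where "U_rc = {S2_1, S2_rc}"
definition U_S2 :: "S2 set" where "U_S2 = UNIV"

definition t_cls :: "nat \<Rightarrow> S2 set \<Rightarrow> (bool list \<Rightarrow> bool) set set" where
  "t_cls n U = {orbit n f | f. f \<in> L2 n \<and> stab n f = U}"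
definition tbar_cls :: "nat \<Rightarrow> S2 set \<Rightarrow> (bool list \<Rightarrow> bool) set set" where
  "tbar_cls n U = {orbit n f | f. f \<in> L2bar n \<and> stab n f = U}"

definition alpha :: "nat \<Rightarrow> nat \<Rightarrow> nat" where
  "alpha n m = (if even n \<and> odd m then 0 else (n div 2) choose (m div 2))"
definition beta :: "nat \<Rightarrow> nat \<Rightarrow> int" where
  "beta n m = int (n choose m) - int (alpha n m)"

end

theory Submission
  imports Defs
begin

lemma L2_iff: "f \<in> L2 n \<longleftrightarrow> (\<forall>w. length w \<noteq> n \<longrightarrow> \<not> f w)"
  by (auto simp: L2_def)

lemma hat_c_L2: "hat_c n f \<in> L2 n" by (auto simp: L2_def hat_c_def)
lemma hat_r_L2: "hat_r n f \<in> L2 n" by (auto simp: L2_def hat_r_def)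

lemma act_L2: "f \<in> L2 n \<Longrightarrow> act n a f \<in> L2 n"
  by (cases a) (auto simp: hat_c_L2 hat_r_L2)

lemma hat_cc: "f \<in> L2 n \<Longrightarrow> hat_c n (hat_c n f) = f"
  by (rule ext) (auto simp: L2_def hat_c_def cw_def comp_def)
lemma hat_rr: "f \<in> L2 n \<Longrightarrow> hat_r n (hat_r n f) = f"
  by (rule ext) (auto simp: L2_def hat_r_def rw_def)
lemma hat_rc: "hat_r n (hat_c n f) = hat_c n (hat_r n f)"
  by (rule ext) (auto simp: hat_c_def hat_r_def rw_def cw_def rev_map)

lemma act_comm: "f \<in> L2 n \<Longrightarrow> act n a (act n b f) = act n b (act n a f)"
  by (cases a; cases b) (auto simp: hat_rc hat_cc hat_rr hat_c_L2 hat_r_L2)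

lemma act_inv: "f \<in> L2 n \<Longrightarrow> act n a (act n a f) = f"
  by (cases a) (simp_all add: hat_cc hat_rr hat_rc hat_c_L2 hat_r_L2)

lemma act_r_c: "act n S2_r (act n S2_c f) = act n S2_rc f" by simp
lemma act_c_rc: "f \<in> L2 n \<Longrightarrow> act n S2_c (act n S2_rc f) = act n S2_r f"
  by (simp add: hat_rc hat_cc hat_r_L2)
lemma act_r_rc: "f \<in> L2 n \<Longrightarrow> act n S2_r (act n S2_rc f) = act n S2_c f"
  by (simp add: hat_rr hat_c_L2)

lemma stab_act: assumes "f \<in> L2 n" shows "stab n (act n a f) = stab n f"
proof -
  have "act n b (act n a f) = act n a f \<longleftrightarrow> act n b f = f" for b
  proof
    assume h: "act n b (act n a f) = act n a f"
    have "act n b f = act n a (act n a (act n b f))" using act_inv act_L2 assms by simp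
    also have "\<dots> = act n a (act n b (act n a f))" using act_comm assms by simp
    also have "\<dots> = f" using h act_inv assms by simp
    finally show "act n b f = f" .
  next
    assume "act n b f = f" then show "act n b (act n a f) = act n a f"
      using act_comm assms by metis
  qed
  then show ?thesis unfolding stab_def by blast
qed

lemma S2_UNIV: "(UNIV :: S2 set) = {S2_1, S2_r, S2_c, S2_rc}"
  using S2.exhaust by blast

lemma subgroup_cases:
  fixes s :: "S2 set"
  assumes "S2_1 \<in> s" "S2_r\<in>s \<Longrightarrow> S2_c\<in>s \<Longrightarrow> S2_rc \<in> s"
   "S2_c\<in>s \<Longrightarrow> S2_rc\<in>s \<Longrightarrow> S2_r \<in> s" "S2_r\<in>s \<Longrightarrow> S2_rc\<in>s \<Longrightarrow> S2_c \<in> s"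
  shows "s = {S2_1} \<or> s = {S2_1, S2_r} \<or> s = {S2_1, S2_c} \<or> s = {S2_1, S2_rc} \<or> s = UNIV"
proof -
  have e: "\<And>t. (\<And>x. x \<in> s \<longleftrightarrow> x \<in> t) \<Longrightarrow> s = t" by blast
  consider "S2_r \<in> s" "S2_c \<in> s" "S2_rc \<in> s" | "S2_r \<in> s" "S2_c \<notin> s" "S2_rc \<notin> s"
    | "S2_r \<notin> s" "S2_c \<in> s" "S2_rc \<notin> s" | "S2_r \<notin> s" "S2_c \<notin> s" "S2_rc \<in> s"
    | "S2_r \<notin> s" "S2_c \<notin> s" "S2_rc \<notin> s"
    using assms by blast
  then show ?thesis
  proof cases
    case 1
    then have "s = UNIV" using assms(1) apply - apply (rule e) subgoal for x by (cases x) auto done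
    then show ?thesis by blast
  next
    case 2
    then have "s = {S2_1, S2_r}" using assms(1) apply - apply (rule e) subgoal for x by (cases x) auto done
    then show ?thesis by blast
  next
    case 3
    then have "s = {S2_1, S2_c}" using assms(1) apply - apply (rule e) subgoal for x by (cases x) auto done
    then show ?thesis by blast
  next
    case 4
    then have "s = {S2_1, S2_rc}" using assms(1) apply - apply (rule e) subgoal for x by (cases x) auto done
    then show ?thesis by blast
  next
    case 5
    then have "s = {S2_1}" using assms(1) apply - apply (rule e) subgoal for x by (cases x) auto done
    then show ?thesis by blast
  qed
qed

lemma stab_cases:
  assumes "f \<in> L2 n"
  shows "stab n f = U_1 \<or> stab n f = U_r \<or> stab n f = U_c \<or> stab n f = U_rc \<or> stab n f = U_S2"
proof -
  have 1: "S2_1 \<in> stab n f" by (simp add: stab_def)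
  have rc: "S2_r \<in> stab n f \<Longrightarrow> S2_c \<in> stab n f \<Longrightarrow> S2_rc \<in> stab n f"
    by (simp add: stab_def)
  have crc: "S2_c \<in> stab n f \<Longrightarrow> S2_rc \<in> stab n f \<Longrightarrow> S2_r \<in> stab n f"
    using act_c_rc[OF assms] by (simp add: stab_def) 
  have rrc: "S2_r \<in> stab n f \<Longrightarrow> S2_rc \<in> stab n f \<Longrightarrow> S2_c \<in> stab n f"
    using act_r_rc[OF assms] by (simp add: stab_def) 
  show ?thesis
    unfolding U_1_def U_r_def U_c_def U_rc_def U_S2_def
    by (rule subgroup_cases[OF 1 rc crc rrc])
qed

lemma orbit_eq: "orbit n f = {f, hat_r n f, hat_c n f, hat_r n (hat_c n f)}"
proof -
  have "orbit n f = (\<lambda>a. act n a f) ` UNIV" by (auto simp: orbit_def)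
  then show ?thesis by (simp add: S2_UNIV)
qed

lemma card_orbit:
  assumes "f \<in> L2 n"
  shows "card (orbit n f) * card (stab n f) = 4"
proof -
  note cc = hat_cc[OF assms] and rr = hat_rr[OF assms]
  note rcr = hat_rr[OF hat_c_L2[of n f]] and crc = hat_cc[OF hat_r_L2[of n f]]
  from stab_cases[OF assms] show ?thesis
  proof (elim disjE)
    assume s: "stab n f = U_1"
    then have "S2_r \<notin> stab n f" "S2_c \<notin> stab n f" "S2_rc \<notin> stab n f" by (simp_all add: U_1_def)
    then have a: "hat_r n f \<noteq> f" "hat_c n f \<noteq> f" "hat_r n (hat_c n f) \<noteq> f"
      by (simp_all add: stab_def)
    have d4: "hat_r n f \<noteq> hat_c n f"
    proof
      assume e: "hat_r n f = hat_c n f"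
      have "hat_r n (hat_r n f) = hat_r n (hat_c n f)" using e by simp
      then show False using rr a(3) by simp
    qed
    have d5: "hat_r n f \<noteq> hat_r n (hat_c n f)"
    proof
      assume e: "hat_r n f = hat_r n (hat_c n f)"
      have "hat_r n (hat_r n f) = hat_r n (hat_r n (hat_c n f))" using e by simp
      then show False using rr rcr a(2) by simp
    qed
    have d6: "hat_c n f \<noteq> hat_r n (hat_c n f)"
    proof
      assume e: "hat_c n f = hat_r n (hat_c n f)"
      have "hat_c n (hat_c n f) = hat_c n (hat_r n (hat_c n f))" using e by simp
      also have "hat_r n (hat_c n f) = hat_c n (hat_r n f)" by (rule hat_rc)
      finally show False using cc crc a(1) by simp
    qed
    have "card (orbit n f) = 4" unfolding orbit_eq using a d4 d5 d6 by (simp add: card_insert_if)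
    moreover have "card (stab n f) = 1" using s by (simp add: U_1_def)
    ultimately show ?thesis by simp
  next
    assume s: "stab n f = U_r"
    then have "S2_r \<in> stab n f" "S2_c \<notin> stab n f" by (simp_all add: U_r_def)
    then have a: "hat_r n f = f" "hat_c n f \<noteq> f" by (simp_all add: stab_def)
    have "hat_r n (hat_c n f) = hat_c n f" using a(1) by (simp add: hat_rc)
    then have "card (orbit n f) = 2" unfolding orbit_eq using a by (simp add: card_insert_if)
    moreover have "card (stab n f) = 2" using s by (simp add: U_r_def)
    ultimately show ?thesis by simp
  next
    assume s: "stab n f = U_c"
    then have "S2_c \<in> stab n f" "S2_r \<notin> stab n f" by (simp_all add: U_c_def)
    then have a: "hat_c n f = f" "hat_r n f \<noteq> f" by (simp_all add: stab_def)
    then have "card (orbit n f) = 2" unfolding orbit_eq by (simp add: card_insert_if)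
    moreover have "card (stab n f) = 2" using s by (simp add: U_c_def)
    ultimately show ?thesis by simp
  next
    assume s: "stab n f = U_rc"
    then have "S2_rc \<in> stab n f" "S2_c \<notin> stab n f" by (simp_all add: U_rc_def)
    then have a: "hat_r n (hat_c n f) = f" "hat_c n f \<noteq> f" by (simp_all add: stab_def)
    have "hat_r n (hat_r n (hat_c n f)) = hat_r n f" using a(1) by simp
    then have b: "hat_r n f = hat_c n f" using rcr by simp
    have "card (orbit n f) = 2" unfolding orbit_eq using a b by (simp add: card_insert_if)
    moreover have "card (stab n f) = 2" using s by (simp add: U_rc_def)
    ultimately show ?thesis by simp
  next
    assume s: "stab n f = U_S2"
    then have "S2_r \<in> stab n f" "S2_c \<in> stab n f" "S2_rc \<in> stab n f" by (simp_all add: U_S2_def)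
    then have a: "hat_r n f = f" "hat_c n f = f" "hat_r n (hat_c n f) = f"
      by (simp_all add: stab_def)
    have "card (orbit n f) = 1" unfolding orbit_eq using a by simp
    moreover have "card (stab n f) = 4" using s by (simp add: U_S2_def S2_UNIV)
    ultimately show ?thesis by simp
  qed
qed

lemma act_act_orbit: "f \<in> L2 n \<Longrightarrow> act n b (act n a f) \<in> orbit n f"
  by (cases a; cases b) (simp_all add: orbit_eq hat_cc hat_rr hat_rc hat_c_L2 hat_r_L2)

lemma orbit_same:
  assumes "f \<in> L2 n" "g \<in> orbit n f" shows "orbit n g = orbit n f"
proof -
  obtain a where g: "g = act n a f" using assms(2) by (auto simp: orbit_def)
  have gL: "g \<in> L2 n" using g act_L2 assms(1) by simp
  have "orbit n g \<subseteq> orbit n f"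
  proof
    fix x assume "x \<in> orbit n g"
    then obtain b where "x = act n b g" by (auto simp: orbit_def)
    then show "x \<in> orbit n f" using act_act_orbit[OF assms(1)] g by simp
  qed
  moreover have "orbit n f \<subseteq> orbit n g"
  proof
    have fg: "f = act n a g" using g act_inv assms(1) by simp
    fix x assume "x \<in> orbit n f"
    then obtain b where "x = act n b f" by (auto simp: orbit_def)
    then show "x \<in> orbit n g" using act_act_orbit[OF gL] fg by simp
  qed
  ultimately show ?thesis by blast
qed

lemma self_orbit: "f \<in> orbit n f"
  unfolding orbit_def by (auto intro: exI[of _ S2_1])

lemma orbit_count:
  assumes fin: "finite X" and XL: "X \<subseteq> L2 n" and cl: "\<And>f a. f \<in> X \<Longrightarrow> act n a f \<in> X"
  shows "card {orbit n f | f. f \<in> X \<and> stab n f = U} * 4 = card {f \<in> X. stab n f = U} * card U"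
proof (cases "{f \<in> X. stab n f = U} = {}")
  case True
  moreover have "{orbit n f | f. f \<in> X \<and> stab n f = U} = {}" using True by auto
  ultimately show ?thesis by (simp only:) simp
next
  case False
  then obtain f0 where f0: "f0 \<in> X" "stab n f0 = U" by auto
  define k where "k = card (orbit n f0)"
  have k4: "k * card U = 4" using card_orbit[of f0 n] f0 XL k_def by auto
  let ?C = "{orbit n f | f. f \<in> X \<and> stab n f = U}"
  let ?F = "{f \<in> X. stab n f = U}"
  have U: "\<Union>?C = ?F"
  proof
    show "\<Union>?C \<subseteq> ?F"
    proof
      fix g assume "g \<in> \<Union>?C"
      then obtain f where f: "f \<in> X" "stab n f = U" "g \<in> orbit n f" by auto
      then obtain a where "g = act n a f" by (auto simp: orbit_def)
      then show "g \<in> ?F" using f cl stab_act XL by auto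
    qed
    show "?F \<subseteq> \<Union>?C" using self_orbit by blast
  qed
  have finF: "finite ?F" using fin by simp
  have finC: "finite ?C"
  proof -
    have "?C \<subseteq> Pow ?F" using U by blast
    then show ?thesis using finF finite_subset by blast
  qed
  have cardk: "\<forall>c\<in>?C. card c = k"
  proof
    fix c assume "c \<in> ?C"
    then obtain f where f: "c = orbit n f" "f \<in> X" "stab n f = U" by auto
    have "card (orbit n f) * card U = 4" using card_orbit[of f n] f XL by auto
    then have "card (orbit n f) = k" using k4
      by (metis mult_cancel2 mult_is_0 zero_neq_numeral)
    then show "card c = k" using f by simp
  qed
  have disj: "c1 \<inter> c2 = {}" if h1: "c1 \<in> ?C" and h2: "c2 \<in> ?C" and h3: "c1 \<noteq> c2" for c1 c2
  proof (rule ccontr)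
    obtain f1 where f1: "c1 = orbit n f1" "f1 \<in> X" using h1 by blast
    obtain f2 where f2: "c2 = orbit n f2" "f2 \<in> X" using h2 by blast
    assume "c1 \<inter> c2 \<noteq> {}"
    then obtain g where "g \<in> c1" "g \<in> c2" by blast
    then have "orbit n g = c1" "orbit n g = c2" using orbit_same f1 f2 XL by auto
    then show False using h3 by simp
  qed
  have "k * card ?C = card ?F"
  proof -
    have "k * card ?C = card (\<Union>?C)"
      apply (rule card_partition[OF finC])
      subgoal using U finF by simp
      subgoal using cardk by blast
      subgoal using disj by simp
      done
    then show ?thesis using U by simp
  qed
  then have "card ?F * card U = card ?C * (k * card U)" by (simp add: algebra_simps)
  then show ?thesis using k4 by simp
qed

definition proj :: "nat set \<Rightarrow> bool list \<Rightarrow> bool list" where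
  "proj S w = map (nth w) (sorted_list_of_set S)"
definition ext :: "nat \<Rightarrow> nat set \<Rightarrow> (bool list \<Rightarrow> bool) \<Rightarrow> (bool list \<Rightarrow> bool)" where
  "ext n S g = (\<lambda>w. if length w = n then g (proj S w) else False)"
definition flip :: "bool list \<Rightarrow> nat \<Rightarrow> bool list" where
  "flip w j = w[j := \<not> w ! j]"
definition dep :: "nat \<Rightarrow> (bool list \<Rightarrow> bool) \<Rightarrow> nat set" where
  "dep n f = {j. j < n \<and> (\<exists>w. length w = n \<and> f (flip w j) \<noteq> f w)}"
definition rf :: "nat \<Rightarrow> nat set \<Rightarrow> nat set" where
  "rf n S = {i. i < n \<and> n - 1 - i \<in> S}"
definition inv_pos :: "nat set \<Rightarrow> nat \<Rightarrow> nat" where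
  "inv_pos S k = the_inv_into {..<card S} (nth (sorted_list_of_set S)) k"
definition spread :: "nat set \<Rightarrow> nat \<Rightarrow> bool list \<Rightarrow> bool list" where
  "spread S n v = map (\<lambda>k. if k \<in> S then v ! (inv_pos S k) else False) [0..<n]"

lemma dep_sub: "dep n f \<subseteq> {..<n}" by (auto simp: dep_def)

lemma irr_iff_dep: "irreducible_rule n f \<longleftrightarrow> dep n f = {..<n}"
  unfolding irreducible_rule_def dep_def flip_def by auto

lemma length_flip[simp]: "length (flip w j) = length w" by (simp add: flip_def)

lemma agree:
  assumes f: "f \<in> L2 n" and lw: "length w = n" and lw': "length w' = n"
    and ag: "\<forall>j\<in>dep n f. w ! j = w' ! j"
  shows "f w = f w'"
proof -
  define u where "u k = map (\<lambda>i. if i < k then w' ! i else w ! i) [0..<n]" for k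
  have lu: "length (u k) = n" for k by (simp add: u_def)
  have step: "f (u (Suc k)) = f (u k)" if k: "k < n" for k
  proof (cases "w' ! k = w ! k")
    case True
    have "u (Suc k) = u k" by (rule nth_equalityI) (auto simp: u_def lu True less_Suc_eq)
    then show ?thesis by simp
  next
    case False
    then have nd: "k \<notin> dep n f" using ag by auto
    have F2: "w' ! k = (\<not> w ! k)" using False by auto
    have "u (Suc k) = flip (u k) k"
      by (rule nth_equalityI) (auto simp: u_def lu flip_def nth_list_update F2 k less_Suc_eq)
    moreover have "f (flip (u k) k) = f (u k)" using nd k lu by (auto simp: dep_def)
    ultimately show ?thesis by simp
  qed
  have "k \<le> n \<Longrightarrow> f (u k) = f w" for k
  proof (induction k)
    case 0
    have "u 0 = w" by (rule nth_equalityI) (auto simp: u_def lw)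
    then show ?case by simp
  next
    case (Suc k) then show ?case using step by simp
  qed
  moreover have "u n = w'" by (rule nth_equalityI) (auto simp: u_def lw')
  ultimately show ?thesis by (metis order_refl)
qed


lemma length_proj[simp]: "finite S \<Longrightarrow> length (proj S w) = card S"
  by (simp add: proj_def)

lemma proj_nth: "finite S \<Longrightarrow> i < card S \<Longrightarrow> proj S w ! i = w ! (sorted_list_of_set S ! i)"
  by (simp add: proj_def)

lemma sl_in: "finite S \<Longrightarrow> i < card S \<Longrightarrow> sorted_list_of_set S ! i \<in> S"
  by (metis length_sorted_list_of_set nth_mem set_sorted_list_of_set)

lemma sl_surj: "finite S \<Longrightarrow> j \<in> S \<Longrightarrow> \<exists>i<card S. sorted_list_of_set S ! i = j"
  by (metis in_set_conv_nth length_sorted_list_of_set set_sorted_list_of_set)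

lemma sl_inj: "finite S \<Longrightarrow> i < card S \<Longrightarrow> i' < card S \<Longrightarrow>
   sorted_list_of_set S ! i = sorted_list_of_set S ! i' \<longleftrightarrow> i = i'"
  by (simp add: nth_eq_iff_index_eq)

lemma proj_map_Not: assumes S: "S \<subseteq> {..<length w}" shows "proj S (map Not w) = map Not (proj S w)"
proof -
  have fin: "finite S" using S finite_subset by blast
  show ?thesis
  proof (rule nth_equalityI)
    fix i assume "i < length (proj S (map Not w))"
    then have i: "i < card S" using fin by simp
    have "sorted_list_of_set S ! i < length w" using sl_in[OF fin i] S by auto
    then show "proj S (map Not w) ! i = map Not (proj S w) ! i"
      using i fin by (simp add: proj_nth)
  qed (simp add: fin)
qed

lemma proj_upd_out: assumes j: "j \<notin> S" and fin: "finite S" shows "proj S (w[j := x]) = proj S w"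
proof (rule nth_equalityI)
  fix i assume "i < length (proj S (w[j := x]))"
  then have i: "i < card S" using fin by simp
  have "sorted_list_of_set S ! i \<noteq> j" using sl_in[OF fin i] j by auto
  then show "proj S (w[j := x]) ! i = proj S w ! i"
    using i fin by (simp add: proj_nth)
qed (simp add: fin)

lemma proj_upd_in:
  assumes S: "S \<subseteq> {..<length w}" and i: "i < card S"
  shows "proj S (w[sorted_list_of_set S ! i := x]) = (proj S w)[i := x]"
proof -
  have fin: "finite S" using S finite_subset by blast
  show ?thesis
    unfolding proj_def
  proof (rule nth_equalityI)
    fix t assume t: "t < length (map ((!) (w[sorted_list_of_set S ! i := x])) (sorted_list_of_set S))"
    then have t': "t < card S" by simp
    have lt: "sorted_list_of_set S ! t < length w" using sl_in[OF fin t'] S by auto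
    show "map ((!) (w[sorted_list_of_set S ! i := x])) (sorted_list_of_set S) ! t =
        (map ((!) w) (sorted_list_of_set S))[i := x] ! t"
      using t' i lt sl_inj[OF fin t' i] by (auto simp: nth_list_update)
  qed simp
qed

lemma proj_flip_in:
  assumes S: "S \<subseteq> {..<length w}" and i: "i < card S"
  shows "proj S (flip w (sorted_list_of_set S ! i)) = flip (proj S w) i"
proof -
  have fin: "finite S" using S finite_subset by blast
  show ?thesis unfolding flip_def
    using proj_upd_in[OF S i] proj_nth[OF fin i] by simp
qed

lemma proj_flip_out: "j \<notin> S \<Longrightarrow> finite S \<Longrightarrow> proj S (flip w j) = proj S w"
  unfolding flip_def by (rule proj_upd_out)

lemma inv_pos_sl: "finite S \<Longrightarrow> i < card S \<Longrightarrow> inv_pos S (sorted_list_of_set S ! i) = i"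
  unfolding inv_pos_def
  by (rule the_inv_into_f_f) (auto intro!: inj_on_nth)

lemma length_spread[simp]: "length (spread S n v) = n" by (simp add: spread_def)

lemma proj_spread:
  assumes S: "S \<subseteq> {..<n}" and lv: "length v = card S"
  shows "proj S (spread S n v) = v"
proof -
  have fin: "finite S" using S finite_subset by blast
  show ?thesis
  proof (rule nth_equalityI)
    show "length (proj S (spread S n v)) = length v" using fin lv by simp
    fix i assume "i < length (proj S (spread S n v))"
    then have i: "i < card S" using fin by simp
    have lt: "sorted_list_of_set S ! i < n" using sl_in[OF fin i] S by auto
    show "proj S (spread S n v) ! i = v ! i"
      using proj_nth[OF fin i] lt sl_in[OF fin i] inv_pos_sl[OF fin i]
      by (simp add: spread_def)
  qed
qed

lemma spread_proj_nth:
  assumes S: "S \<subseteq> {..<n}" and lw: "length w = n" and k: "k \<in> S"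
  shows "spread S n (proj S w) ! k = w ! k"
proof -
  have fin: "finite S" using S finite_subset by blast
  obtain i where i: "i < card S" "sorted_list_of_set S ! i = k" using sl_surj[OF fin k] by blast
  have "k < n" using S k by auto
  then show ?thesis using k i inv_pos_sl[OF fin i(1)] proj_nth[OF fin i(1)]
    by (simp add: spread_def)
qed


lemma rf_sub: "rf n S \<subseteq> {..<n}" by (auto simp: rf_def)

lemma rf_image: assumes S: "S \<subseteq> {..<n}" shows "rf n S = (\<lambda>i. n - 1 - i) ` S"
proof
  show "rf n S \<subseteq> (\<lambda>i. n - 1 - i) ` S"
  proof
    fix i assume "i \<in> rf n S"
    then have i: "i < n" "n - 1 - i \<in> S" by (auto simp: rf_def)
    then have "i = n - 1 - (n - 1 - i)" by simp
    then show "i \<in> (\<lambda>i. n - 1 - i) ` S" using i by blast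
  qed
  show "(\<lambda>i. n - 1 - i) ` S \<subseteq> rf n S"
  proof
    fix y assume "y \<in> (\<lambda>i. n - 1 - i) ` S"
    then obtain x where x: "x \<in> S" "y = n - 1 - x" by blast
    then have "x < n" using S by auto
    then have "y < n" "n - 1 - y = x" using x by auto
    then show "y \<in> rf n S" using x by (simp add: rf_def)
  qed
qed

lemma rf_rf: "S \<subseteq> {..<n} \<Longrightarrow> rf n (rf n S) = S"
  unfolding rf_def by (auto simp: subset_eq)

lemma inj_refl: "inj_on (\<lambda>i::nat. n - 1 - i) {..<n}"
  by (auto simp: inj_on_def)

lemma card_rf: "S \<subseteq> {..<n} \<Longrightarrow> card (rf n S) = card S"
  using rf_image card_image inj_on_subset[OF inj_refl] by metis

lemma sl_rf:
  assumes S: "S \<subseteq> {..<n}"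
  shows "sorted_list_of_set (rf n S) = rev (map (\<lambda>i. n - 1 - i) (sorted_list_of_set S))"
proof -
  have fin: "finite S" using S finite_subset by blast
  have finr: "finite (rf n S)" using rf_sub finite_subset by blast
  have "sorted_wrt (<) (sorted_list_of_set S)" by simp
  then have "sorted_wrt (\<lambda>x y. n - 1 - y < n - 1 - x) (sorted_list_of_set S)"
    by (rule sorted_wrt_mono_rel[rotated]) (use S fin in auto)
  then have "sorted_wrt (<) (rev (map (\<lambda>i. n - 1 - i) (sorted_list_of_set S)))"
    by (simp add: sorted_wrt_rev sorted_wrt_map)
  moreover have "set (rev (map (\<lambda>i. n - 1 - i) (sorted_list_of_set S))) = rf n S"
    using rf_image[OF S] fin by simp
  moreover have "length (rev (map (\<lambda>i. n - 1 - i) (sorted_list_of_set S))) = card (rf n S)"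
    using card_rf[OF S] by simp
  ultimately show ?thesis using sorted_list_of_set_unique[OF finr] by blast
qed

lemma proj_rev:
  assumes S: "S \<subseteq> {..<n}" and lw: "length w = n"
  shows "proj S (rev w) = rev (proj (rf n S) w)"
proof -
  have fin: "finite S" using S finite_subset by blast
  have "rev (proj (rf n S) w) = map (\<lambda>i. w ! (n - 1 - i)) (sorted_list_of_set S)"
    unfolding proj_def sl_rf[OF S] by (simp add: rev_map comp_def)
  also have "\<dots> = map (nth (rev w)) (sorted_list_of_set S)"
    using S fin lw by (auto simp: rev_nth intro!: map_cong)
  finally show ?thesis by (simp add: proj_def)
qed

lemma ext_L2: "ext n S g \<in> L2 n" by (simp add: ext_def L2_def)

lemma S_fin: assumes "S \<subseteq> {..<n::nat}" shows "finite S"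
  by (rule finite_subset[OF assms finite_lessThan])

lemma hat_c_ext:
  assumes S: "S \<subseteq> {..<n}"
  shows "hat_c n (ext n S g) = ext n S (hat_c (card S) g)"
proof (rule ext)
  fix w
  show "hat_c n (ext n S g) w = ext n S (hat_c (card S) g) w"
    using S S_fin[OF S] proj_map_Not[of S w]
    by (auto simp: hat_c_def ext_def cw_def)
qed

lemma hat_r_ext:
  assumes S: "S \<subseteq> {..<n}"
  shows "hat_r n (ext n S g) = ext n (rf n S) (hat_r (card S) g)"
proof (rule ext)
  fix w
  have fr: "finite (rf n S)" using S_fin[OF rf_sub] .
  show "hat_r n (ext n S g) w = ext n (rf n S) (hat_r (card S) g) w"
    using S proj_rev[OF S, of w] card_rf[OF S] fr
    by (auto simp: hat_r_def ext_def rw_def)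
qed

lemma ext_inj:
  assumes S: "S \<subseteq> {..<n}" and g: "g \<in> L2 (card S)" and g': "g' \<in> L2 (card S)"
    and e: "ext n S g = ext n S g'"
  shows "g = g'"
proof (rule ext)
  fix v
  show "g v = g' v"
  proof (cases "length v = card S")
    case True
    have "ext n S g (spread S n v) = ext n S g' (spread S n v)" using e by simp
    then show ?thesis using proj_spread[OF S True] by (simp add: ext_def)
  next
    case False
    then show ?thesis using g g' by (simp add: L2_def)
  qed
qed

lemma dep_ext:
  assumes S: "S \<subseteq> {..<n}" and g: "g \<in> L2bar (card S)"
  shows "dep n (ext n S g) = S"
proof -
  have fin: "finite S" using S_fin[OF S] .
  have irr: "dep (card S) g = {..<card S}" using g by (simp add: L2bar_def irr_iff_dep)
  show ?thesis
  proof
    show "dep n (ext n S g) \<subseteq> S"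
    proof
      fix j assume "j \<in> dep n (ext n S g)"
      then obtain w where w: "length w = n" "ext n S g (flip w j) \<noteq> ext n S g w"
        by (auto simp: dep_def)
      show "j \<in> S"
      proof (rule ccontr)
        assume "j \<notin> S"
        then have "proj S (flip w j) = proj S w" using proj_flip_out fin by blast
        then show False using w by (simp add: ext_def)
      qed
    qed
    show "S \<subseteq> dep n (ext n S g)"
    proof
      fix j assume j: "j \<in> S"
      obtain i where i: "i < card S" "sorted_list_of_set S ! i = j" using sl_surj[OF fin j] by blast
      have "i \<in> dep (card S) g" using irr i by simp
      then obtain v where v: "length v = card S" "g (flip v i) \<noteq> g v" by (auto simp: dep_def)
      define w where "w = spread S n v"
      have lw: "length w = n" by (simp add: w_def)
      have pw: "proj S w = v" using proj_spread[OF S v(1)] w_def by simp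
      have pfw: "proj S (flip w j) = flip v i"
        using proj_flip_in[of S w i] S lw i pw by auto
      have "ext n S g (flip w j) \<noteq> ext n S g w" using v pw pfw lw by (simp add: ext_def)
      moreover have "j < n" using S j by auto
      ultimately show "j \<in> dep n (ext n S g)" using lw by (auto simp: dep_def)
    qed
  qed
qed

lemma decomp:
  assumes f: "f \<in> L2 n"
  shows "\<exists>g \<in> L2bar (card (dep n f)). f = ext n (dep n f) g"
proof -
  define S where "S = dep n f"
  have S: "S \<subseteq> {..<n}" using dep_sub S_def by simp
  have fin: "finite S" using S_fin[OF S] .
  define g where "g v = (if length v = card S then f (spread S n v) else False)" for v
  have fe: "f = ext n S g"
  proof (rule ext)
    fix w
    show "f w = ext n S g w"
    proof (cases "length w = n")
      case True
      have "f (spread S n (proj S w)) = f w"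
        by (rule agree[OF f]) (use True spread_proj_nth[OF S True] S_def in auto)
      then show ?thesis using True fin by (simp add: ext_def g_def)
    next
      case False then show ?thesis using f by (simp add: ext_def L2_def)
    qed
  qed
  have gL: "g \<in> L2 (card S)" by (simp add: g_def L2_def)
  have "dep (card S) g = {..<card S}"
  proof
    show "dep (card S) g \<subseteq> {..<card S}" by (rule dep_sub)
    show "{..<card S} \<subseteq> dep (card S) g"
    proof
      fix i assume "i \<in> {..<card S}"
      then have i: "i < card S" by simp
      define j where "j = sorted_list_of_set S ! i"
      have "j \<in> dep n f" using sl_in[OF fin i] S_def j_def by simp
      then obtain w where w: "length w = n" "f (flip w j) \<noteq> f w" by (auto simp: dep_def)
      have "S \<subseteq> {..<length w}" using S w by simp
      then have pf: "proj S (flip w j) = flip (proj S w) i" using proj_flip_in[OF _ i] j_def by simp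
      have "g (flip (proj S w) i) \<noteq> g (proj S w)"
        using w fe pf by (simp add: ext_def)
      moreover have "length (proj S w) = card S" using fin by simp
      ultimately show "i \<in> dep (card S) g" using i unfolding dep_def by blast
    qed
  qed
  then have "g \<in> L2bar (card S)" using gL by (simp add: L2bar_def irr_iff_dep)
  then show ?thesis using fe unfolding S_def[symmetric] by blast
qed

lemma rev_flip_rev: "j < length w \<Longrightarrow> rev (flip (rev w) j) = flip w (length w - 1 - j)"
  by (rule nth_equalityI) (auto simp: flip_def rev_nth nth_list_update)

lemma map_Not_flip: "map Not (flip (map Not w) j) = flip w j"
  by (cases "j < length w") (simp_all add: flip_def map_update comp_def list_update_beyond)

lemma act_L2bar:
  assumes g: "g \<in> L2bar m" shows "act m a g \<in> L2bar m"
proof -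
  have gL: "g \<in> L2 m" and irr: "\<And>j. j < m \<Longrightarrow> \<exists>w. length w = m \<and> g (flip w j) \<noteq> g w"
    using g by (auto simp: L2bar_def irreducible_rule_def flip_def)
  have c: "irreducible_rule m (hat_c m h)" if h: "\<And>j. j < m \<Longrightarrow> \<exists>w. length w = m \<and> h (flip w j) \<noteq> h w" for h
    unfolding irreducible_rule_def
  proof (intro allI impI)
    fix j assume j: "j < m"
    obtain w where w: "length w = m" "h (flip w j) \<noteq> h w" using h[OF j] by blast
    have "hat_c m h (flip (map Not w) j) \<noteq> hat_c m h (map Not w)"
      using w map_Not_flip[of w j] by (simp add: hat_c_def cw_def comp_def)
    then show "\<exists>w. length w = m \<and> hat_c m h (w[j := \<not> w ! j]) \<noteq> hat_c m h w"
      using w(1) unfolding flip_def by (intro exI[of _ "map Not w"]) simp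
  qed
  have r: "irreducible_rule m (hat_r m h)" if h: "\<And>j. j < m \<Longrightarrow> \<exists>w. length w = m \<and> h (flip w j) \<noteq> h w" for h
    unfolding irreducible_rule_def
  proof (intro allI impI)
    fix j assume j: "j < m"
    obtain w where w: "length w = m" "h (flip w (m - 1 - j)) \<noteq> h w" using h[of "m - 1 - j"] j by auto
    have "hat_r m h (flip (rev w) j) \<noteq> hat_r m h (rev w)"
      using w rev_flip_rev[of j w] j by (simp add: hat_r_def rw_def)
    then show "\<exists>w. length w = m \<and> hat_r m h (w[j := \<not> w ! j]) \<noteq> hat_r m h w"
      using w(1) unfolding flip_def by (intro exI[of _ "rev w"]) simp
  qed
  have cirr: "\<And>j. j < m \<Longrightarrow> \<exists>w. length w = m \<and> hat_c m g (flip w j) \<noteq> hat_c m g w"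
    using c[OF irr] by (simp add: irreducible_rule_def flip_def)
  show ?thesis
  proof (cases a)
    case S2_1 then show ?thesis using g by simp
  next
    case S2_c then show ?thesis using c[OF irr] hat_c_L2 by (simp add: L2bar_def)
  next
    case S2_r then show ?thesis using r[OF irr] hat_r_L2 by (simp add: L2bar_def)
  next
    case S2_rc then show ?thesis using r[OF cirr] hat_r_L2 by (simp add: L2bar_def)
  qed
qed

definition sym_sets :: "nat \<Rightarrow> nat \<Rightarrow> nat set set" where
  "sym_sets n m = {S. S \<subseteq> {..<n} \<and> card S = m \<and> rf n S = S}"

lemma rf_empty[simp]: "rf n {} = {}" by (simp add: rf_def)

lemma rf_Un: "rf n (A \<union> B) = rf n A \<union> rf n B" by (auto simp: rf_def)

lemma rf_ge: "i \<in> rf n L \<Longrightarrow> L \<subseteq> {..<n div 2} \<Longrightarrow> n - n div 2 \<le> i \<and> i < n"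
  by (auto simp: rf_def subset_eq)

lemma rf_ge2: "i \<in> rf n L \<Longrightarrow> L \<subseteq> {..<n div 2} \<Longrightarrow> n div 2 \<le> i"
  using rf_ge[of i n L] by linarith

definition Mid :: "nat \<Rightarrow> nat set" where
  "Mid n = (if odd n then {n div 2} else {})"

lemma rf_Mid: "rf n (Mid n) = Mid n"
  by (auto simp: rf_def Mid_def elim!: oddE)

lemma mid_not_rf:
  assumes "odd n" and L: "L \<subseteq> {..<n div 2}" shows "n div 2 \<notin> rf n L"
proof
  assume h: "n div 2 \<in> rf n L"
  have "n - n div 2 \<le> n div 2" using rf_ge[OF h L] by simp
  then show False using assms(1) by presburger
qed

definition Phi :: "nat \<Rightarrow> nat \<Rightarrow> nat set \<Rightarrow> nat set" where
  "Phi n m L = L \<union> rf n L \<union> (if odd m then Mid n else {})"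

lemma Phi_props:
  assumes L: "L \<subseteq> {..<n div 2}" and par: "odd n \<or> even m"
  shows "Phi n m L \<subseteq> {..<n}" "rf n (Phi n m L) = Phi n m L"
    "card (Phi n m L) = 2 * card L + (if odd m then 1 else 0)"
    "Phi n m L \<inter> {..<n div 2} = L"
proof -
  have Ln: "L \<subseteq> {..<n}" using L by auto
  have finL: "finite L" using L finite_subset by blast
  have finR: "finite (rf n L)" using rf_sub finite_subset by blast
  have MidE: "(if odd m then Mid n else {}) \<subseteq> {n div 2}" by (auto simp: Mid_def)
  have "odd n \<Longrightarrow> n div 2 < n" by presburger
  then show "Phi n m L \<subseteq> {..<n}" using Ln rf_sub[of n L] MidE
    by (auto simp: Phi_def Mid_def split: if_splits)
  show "rf n (Phi n m L) = Phi n m L"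
    unfolding Phi_def rf_Un rf_rf[OF Ln] by (auto simp: rf_Mid)
  have d1: "L \<inter> rf n L = {}" using rf_ge[OF _ L] L by fastforce
  have d2: "(L \<union> rf n L) \<inter> (if odd m then Mid n else {}) = {}"
    using mid_not_rf[OF _ L] L by (auto simp: Mid_def)
  have cM: "card (if odd m then Mid n else {}) = (if odd m then 1 else 0)"
    using par by (auto simp: Mid_def)
  have "card (Phi n m L) = card (L \<union> rf n L) + card (if odd m then Mid n else {})"
    unfolding Phi_def by (rule card_Un_disjoint) (use finL finR d2 in \<open>auto simp: Mid_def\<close>)
  also have "card (L \<union> rf n L) = card L + card (rf n L)"
    by (rule card_Un_disjoint) (use finL finR d1 in auto)
  also have "card (rf n L) = card L" by (rule card_rf[OF Ln])
  finally show "card (Phi n m L) = 2 * card L + (if odd m then 1 else 0)" using cM by simp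
  have "rf n L \<inter> {..<n div 2} = {}" using rf_ge2[OF _ L] by fastforce
  then show "Phi n m L \<inter> {..<n div 2} = L"
    using L by (auto simp: Phi_def Mid_def)
qed

lemma sym_decomp:
  assumes S: "S \<subseteq> {..<n}" "rf n S = S"
  shows "S = (S \<inter> {..<n div 2}) \<union> rf n (S \<inter> {..<n div 2}) \<union> (S \<inter> Mid n)"
proof
  show "(S \<inter> {..<n div 2}) \<union> rf n (S \<inter> {..<n div 2}) \<union> (S \<inter> Mid n) \<subseteq> S"
    using S by (auto simp: rf_def)
  show "S \<subseteq> (S \<inter> {..<n div 2}) \<union> rf n (S \<inter> {..<n div 2}) \<union> (S \<inter> Mid n)"
  proof
    fix i assume i: "i \<in> S"
    then have "i < n" using S by auto
    have "n - 1 - i \<in> S" using i S(2) by (metis (no_types, lifting) mem_Collect_eq rf_def)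
    then show "i \<in> (S \<inter> {..<n div 2}) \<union> rf n (S \<inter> {..<n div 2}) \<union> (S \<inter> Mid n)"
      using i \<open>i < n\<close> by (auto simp: rf_def Mid_def elim!: oddE evenE)
  qed
qed

lemma sym_card:
  assumes S: "S \<subseteq> {..<n}" "rf n S = S"
  shows "card S = 2 * card (S \<inter> {..<n div 2}) + card (S \<inter> Mid n)"
proof -
  let ?L = "S \<inter> {..<n div 2}"
  have L: "?L \<subseteq> {..<n div 2}" by auto
  have Ln: "?L \<subseteq> {..<n}" using L by auto
  have finL: "finite ?L" by simp
  have finR: "finite (rf n ?L)" using rf_sub finite_subset by blast
  have d1: "?L \<inter> rf n ?L = {}" using rf_ge[OF _ L] by fastforce
  have nr: "n div 2 \<notin> rf n ?L" if "odd n"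
  proof
    assume h: "n div 2 \<in> rf n ?L"
    have "n - n div 2 \<le> n div 2" using rf_ge[OF h L] by simp
    then show False using that by presburger
  qed
  have d2: "(?L \<union> rf n ?L) \<inter> (S \<inter> Mid n) = {}"
    using nr by (auto simp: Mid_def)
  have "card S = card (?L \<union> rf n ?L) + card (S \<inter> Mid n)"
    by (subst sym_decomp[OF S]) (rule card_Un_disjoint, use finL finR d2 in \<open>auto simp: Mid_def\<close>)
  also have "card (?L \<union> rf n ?L) = card ?L + card (rf n ?L)"
    by (rule card_Un_disjoint) (use finL finR d1 in auto)
  also have "card (rf n ?L) = card ?L" by (rule card_rf[OF Ln])
  finally show ?thesis by simp
qed

lemma card_sym_sets: "card (sym_sets n m) = alpha n m"
proof (cases "even n \<and> odd m")
  case True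
  have "sym_sets n m = {}"
  proof (rule ccontr)
    assume "sym_sets n m \<noteq> {}"
    then obtain S where S: "S \<subseteq> {..<n}" "card S = m" "rf n S = S" by (auto simp: sym_sets_def)
    have "Mid n = {}" using True by (simp add: Mid_def)
    then have "card S = 2 * card (S \<inter> {..<n div 2})" using sym_card[OF S(1,3)] by simp
    then show False using S(2) True by auto
  qed
  then show ?thesis using True by (simp add: alpha_def)
next
  case False
  then have par: "odd n \<or> even m" by blast
  let ?Low = "{..<n div 2}"
  have inj: "inj_on (\<lambda>S. S \<inter> ?Low) (sym_sets n m)"
  proof (rule inj_onI)
    fix S T assume S: "S \<in> sym_sets n m" and T: "T \<in> sym_sets n m" and e: "S \<inter> ?Low = T \<inter> ?Low"
    have M: "X \<inter> Mid n = (if odd m then Mid n else {})" if X: "X \<in> sym_sets n m" for X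
    proof -
      have X': "X \<subseteq> {..<n}" "card X = m" "rf n X = X" using X by (auto simp: sym_sets_def)
      have c: "card X = 2 * card (X \<inter> ?Low) + card (X \<inter> Mid n)" by (rule sym_card[OF X'(1,3)])
      show ?thesis
      proof (cases "odd n")
        case True
        then have Mi: "Mid n = {n div 2}" by (simp add: Mid_def)
        show ?thesis using c X'(2) unfolding Mi by (cases "n div 2 \<in> X") auto
      next
        case False
        then show ?thesis using par by (simp add: Mid_def)
      qed
    qed
    have "S = (S \<inter> ?Low) \<union> rf n (S \<inter> ?Low) \<union> (S \<inter> Mid n)"
      using S by (intro sym_decomp) (auto simp: sym_sets_def)
    also have "\<dots> = (T \<inter> ?Low) \<union> rf n (T \<inter> ?Low) \<union> (T \<inter> Mid n)" using e M[OF S] M[OF T] by simp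
    also have "\<dots> = T" using T by (intro sym_decomp[symmetric]) (auto simp: sym_sets_def)
    finally show "S = T" .
  qed
  have img: "(\<lambda>S. S \<inter> ?Low) ` sym_sets n m = {L. L \<subseteq> ?Low \<and> card L = m div 2}"
  proof
    show "(\<lambda>S. S \<inter> ?Low) ` sym_sets n m \<subseteq> {L. L \<subseteq> ?Low \<and> card L = m div 2}"
    proof
      fix L assume "L \<in> (\<lambda>S. S \<inter> ?Low) ` sym_sets n m"
      then obtain S where S: "S \<in> sym_sets n m" "L = S \<inter> ?Low" by blast
      have S': "S \<subseteq> {..<n}" "card S = m" "rf n S = S" using S by (auto simp: sym_sets_def)
      have c: "card S = 2 * card L + card (S \<inter> Mid n)" using sym_card[OF S'(1,3)] S(2) by simp
      have "card (S \<inter> Mid n) \<le> 1"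
        by (rule order_trans[OF card_mono[of "Mid n"]]) (auto simp: Mid_def)
      then have "card L = m div 2" using c S'(2) by linarith
      then show "L \<in> {L. L \<subseteq> ?Low \<and> card L = m div 2}" using S(2) by auto
    qed
    show "{L. L \<subseteq> ?Low \<and> card L = m div 2} \<subseteq> (\<lambda>S. S \<inter> ?Low) ` sym_sets n m"
    proof
      fix L assume "L \<in> {L. L \<subseteq> ?Low \<and> card L = m div 2}"
      then have L: "L \<subseteq> ?Low" "card L = m div 2" by auto
      note P = Phi_props[OF L(1) par]
      have "card (Phi n m L) = m" using P(3) L(2) by presburger
      then have "Phi n m L \<in> sym_sets n m" using P(1,2) by (simp add: sym_sets_def)
      then show "L \<in> (\<lambda>S. S \<inter> ?Low) ` sym_sets n m" using P(4) by (metis image_eqI)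
    qed
  qed
  have "card (sym_sets n m) = card {L. L \<subseteq> ?Low \<and> card L = m div 2}"
    using card_image[OF inj] img by simp
  also have "\<dots> = (n div 2) choose (m div 2)" using n_subsets[of ?Low "m div 2"] by simp
  moreover have "alpha n m = (n div 2) choose (m div 2)" unfolding alpha_def by (rule if_not_P[OF False])
  ultimately show ?thesis by simp
qed

fun actS :: "nat \<Rightarrow> S2 \<Rightarrow> nat set \<Rightarrow> nat set" where
  "actS n S2_1 S = S"
| "actS n S2_c S = S"
| "actS n S2_r S = rf n S"
| "actS n S2_rc S = rf n S"

lemma act_ext:
  assumes S: "S \<subseteq> {..<n}"
  shows "act n a (ext n S g) = ext n (actS n a S) (act (card S) a g)"
  by (cases a) (simp_all add: hat_c_ext[OF S] hat_r_ext[OF S])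

lemma actS_sub: "S \<subseteq> {..<n} \<Longrightarrow> actS n a S \<subseteq> {..<n}"
  by (cases a) (simp_all add: rf_sub)

lemma actS_card: "S \<subseteq> {..<n} \<Longrightarrow> card (actS n a S) = card S"
  by (cases a) (simp_all add: card_rf)

lemma stab_ext:
  assumes S: "S \<subseteq> {..<n}" and g: "g \<in> L2bar (card S)"
  shows "stab n (ext n S g) = stab (card S) g \<inter> {a. actS n a S = S}"
proof -
  have gL: "g \<in> L2 (card S)" using g by (simp add: L2bar_def)
  have "act n a (ext n S g) = ext n S g \<longleftrightarrow> act (card S) a g = g \<and> actS n a S = S" for a
  proof
    assume e: "act n a (ext n S g) = ext n S g"
    then have e2: "ext n (actS n a S) (act (card S) a g) = ext n S g" using act_ext[OF S] by simp
    have ag: "act (card S) a g \<in> L2bar (card (actS n a S))"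
      using act_L2bar[OF g] actS_card[OF S] by simp
    have "dep n (ext n (actS n a S) (act (card S) a g)) = actS n a S"
      by (rule dep_ext[OF actS_sub[OF S] ag])
    then have aS: "actS n a S = S" using e2 dep_ext[OF S g] by simp
    have "act (card S) a g \<in> L2 (card S)" using act_L2[OF gL] .
    then have "act (card S) a g = g" using ext_inj[OF S _ gL] e2 aS by simp
    then show "act (card S) a g = g \<and> actS n a S = S" using aS by simp
  next
    assume "act (card S) a g = g \<and> actS n a S = S"
    then show "act n a (ext n S g) = ext n S g" using act_ext[OF S, of a g] by simp
  qed
  then show ?thesis unfolding stab_def by blast
qed

lemma sS_eq: "{a. actS n a S = S} = (if rf n S = S then UNIV else U_c)"
proof (rule set_eqI)
  fix a show "a \<in> {a. actS n a S = S} \<longleftrightarrow> a \<in> (if rf n S = S then UNIV else U_c)"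
    by (cases a) (simp_all add: U_c_def)
qed

lemma finite_L2: "finite (L2 n)"
proof -
  let ?W = "{w :: bool list. length w = n}"
  have fW: "finite ?W" using finite_lists_length_eq[of "UNIV :: bool set" n] by simp
  have "L2 n \<subseteq> (\<lambda>X w. w \<in> X) ` Pow ?W"
  proof
    fix f assume f: "f \<in> L2 n"
    have "f = (\<lambda>w. w \<in> {w. f w})" by simp
    moreover have "{w. f w} \<in> Pow ?W" using f by (auto simp: L2_def)
    ultimately show "f \<in> (\<lambda>X w. w \<in> X) ` Pow ?W" by blast
  qed
  then show ?thesis using fW finite_subset by blast
qed

lemma finite_L2bar: "finite (L2bar n)"
  using finite_L2[of n] by (rule finite_subset[rotated]) (auto simp: L2bar_def)

definition Hc :: "S2 set \<Rightarrow> nat \<Rightarrow> bool \<Rightarrow> nat" where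
  "Hc U m b = card {g \<in> L2bar m. stab m g \<inter> (if b then UNIV else U_c) = U}"

lemma card_F:
  "card {f \<in> L2 n. stab n f = U} = (\<Sum>S\<in>Pow {..<n}. Hc U (card S) (rf n S = S))"
proof -
  define G where "G S = {g \<in> L2bar (card S). stab (card S) g \<inter> (if rf n S = S then UNIV else U_c) = U}" for S
  have eq: "{f \<in> L2 n. stab n f = U} = (\<Union>S\<in>Pow {..<n}. ext n S ` G S)"
  proof
    show "{f \<in> L2 n. stab n f = U} \<subseteq> (\<Union>S\<in>Pow {..<n}. ext n S ` G S)"
    proof
      fix f assume "f \<in> {f \<in> L2 n. stab n f = U}"
      then have f: "f \<in> L2 n" "stab n f = U" by auto
      obtain g where g: "g \<in> L2bar (card (dep n f))" "f = ext n (dep n f) g" using decomp[OF f(1)] by blast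
      have D: "dep n f \<subseteq> {..<n}" by (rule dep_sub)
      have "stab n f = stab (card (dep n f)) g \<inter> (if rf n (dep n f) = dep n f then UNIV else U_c)"
        using stab_ext[OF D g(1)] g(2) sS_eq by metis
      then have "g \<in> G (dep n f)" using f(2) g(1) by (simp add: G_def)
      then show "f \<in> (\<Union>S\<in>Pow {..<n}. ext n S ` G S)" using D g(2) by blast
    qed
    show "(\<Union>S\<in>Pow {..<n}. ext n S ` G S) \<subseteq> {f \<in> L2 n. stab n f = U}"
    proof
      fix f assume "f \<in> (\<Union>S\<in>Pow {..<n}. ext n S ` G S)"
      then obtain S g where S: "S \<subseteq> {..<n}" and g: "g \<in> G S" and fe: "f = ext n S g" by blast
      have gb: "g \<in> L2bar (card S)" using g by (simp add: G_def)
      have "stab n f = U" using stab_ext[OF S gb] sS_eq[of n S] g fe by (simp add: G_def)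
      then show "f \<in> {f \<in> L2 n. stab n f = U}" using fe ext_L2 by simp
    qed
  qed
  have finG: "finite (G S)" for S using finite_L2bar by (simp add: G_def)
  have disj: "ext n S ` G S \<inter> ext n T ` G T = {}" if "S \<in> Pow {..<n}" "T \<in> Pow {..<n}" "S \<noteq> T" for S T
  proof (rule ccontr)
    assume "ext n S ` G S \<inter> ext n T ` G T \<noteq> {}"
    then obtain g h where g: "g \<in> G S" and h: "h \<in> G T" and e: "ext n S g = ext n T h" by blast
    have "dep n (ext n S g) = S" using dep_ext[of S n g] that g by (simp add: G_def)
    moreover have "dep n (ext n T h) = T" using dep_ext[of T n h] that h by (simp add: G_def)
    ultimately show False using e that by simp
  qed
  have "card {f \<in> L2 n. stab n f = U} = (\<Sum>S\<in>Pow {..<n}. card (ext n S ` G S))"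
    unfolding eq by (rule card_UN_disjoint) (use finG disj in auto)
  also have "\<dots> = (\<Sum>S\<in>Pow {..<n}. card (G S))"
  proof (rule sum.cong[OF refl])
    fix S assume "S \<in> Pow {..<n}"
    then have S: "S \<subseteq> {..<n}" by simp
    have "inj_on (ext n S) (G S)"
      by (rule inj_onI) (use ext_inj[OF S] in \<open>auto simp: G_def L2bar_def\<close>)
    then show "card (ext n S ` G S) = card (G S)" by (rule card_image)
  qed
  also have "\<dots> = (\<Sum>S\<in>Pow {..<n}. Hc U (card S) (rf n S = S))"
    by (simp add: G_def Hc_def)
  finally show ?thesis .
qed

lemma sum_split:
  fixes h :: "nat \<Rightarrow> bool \<Rightarrow> nat"
  shows "(\<Sum>S\<in>Pow {..<n}. h (card S) (rf n S = S)) =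
    (\<Sum>m\<le>n. alpha n m * h m True + ((n choose m) - alpha n m) * h m False)"
proof -
  have "(\<Sum>S\<in>Pow {..<n}. h (card S) (rf n S = S)) =
      (\<Sum>m\<le>n. \<Sum>S\<in>{S \<in> Pow {..<n}. card S = m}. h (card S) (rf n S = S))"
    by (rule sum.group[symmetric]) (auto intro: card_mono[of "{..<n}", simplified])
  also have "\<dots> = (\<Sum>m\<le>n. alpha n m * h m True + ((n choose m) - alpha n m) * h m False)"
  proof (rule sum.cong[OF refl])
    fix m
    define A where "A = {S \<in> Pow {..<n}. card S = m}"
    define P where "P = {S \<in> A. rf n S = S}"
    define N where "N = {S \<in> A. \<not> rf n S = S}"
    have finA: "finite A" by (simp add: A_def)
    have finP: "finite P" "finite N" using finA by (simp_all add: P_def N_def)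
    have cA: "card A = n choose m" using n_subsets[of "{..<n}" m] by (simp add: Pow_def A_def)
    have "P = sym_sets n m" by (auto simp: sym_sets_def P_def A_def)
    then have c1: "card P = alpha n m" using card_sym_sets by simp
    have u: "A = P \<union> N" by (auto simp: P_def N_def)
    have d: "P \<inter> N = {}" by (auto simp: P_def N_def)
    have "card A = card P + card N" unfolding u by (rule card_Un_disjoint[OF finP d])
    then have c2: "card N = (n choose m) - alpha n m" using cA c1 by arith
    have "(\<Sum>S\<in>A. h (card S) (rf n S = S)) = (\<Sum>S\<in>P. h (card S) (rf n S = S)) + (\<Sum>S\<in>N. h (card S) (rf n S = S))"
      unfolding u by (rule sum.union_disjoint[OF finP d])
    also have "(\<Sum>S\<in>P. h (card S) (rf n S = S)) = (\<Sum>S\<in>P. h m True)"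
      by (rule sum.cong) (auto simp: P_def A_def)
    also have "(\<Sum>S\<in>N. h (card S) (rf n S = S)) = (\<Sum>S\<in>N. h m False)"
      by (rule sum.cong) (auto simp: N_def A_def)
    finally show "(\<Sum>S\<in>{S \<in> Pow {..<n}. card S = m}. h (card S) (rf n S = S)) = alpha n m * h m True + ((n choose m) - alpha n m) * h m False"
      using c1 c2 by (simp add: A_def)
  qed
  finally show ?thesis .
qed

definition Fb :: "nat \<Rightarrow> S2 set \<Rightarrow> nat" where
  "Fb m U = card {g \<in> L2bar m. stab m g = U}"

lemma alpha_le: "alpha n m \<le> n choose m"
proof -
  have "card (sym_sets n m) \<le> card {S. S \<subseteq> {..<n} \<and> card S = m}"
    by (rule card_mono) (auto simp: sym_sets_def)
  then show ?thesis using card_sym_sets n_subsets[of "{..<n}" m] by simp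
qed

lemma alpha_nn: "alpha n n = 1"
  by (simp add: alpha_def)

lemma beta_real: "real_of_int (beta n m) = real (n choose m) - real (alpha n m)"
  by (simp add: beta_def)

lemma Ff_sum:
  "real (card {f \<in> L2 n. stab n f = U}) =
    (\<Sum>m\<le>n. real (alpha n m) * real (Fb m U) + real_of_int (beta n m) * real (Hc U m False))"
proof -
  have "card {f \<in> L2 n. stab n f = U} =
     (\<Sum>m\<le>n. alpha n m * Hc U m True + ((n choose m) - alpha n m) * Hc U m False)"
    using card_F[of n U] sum_split[of "Hc U" n] by simp
  moreover have "Hc U m True = Fb m U" for m by (simp add: Hc_def Fb_def)
  ultimately have "card {f \<in> L2 n. stab n f = U} =
     (\<Sum>m\<le>n. alpha n m * Fb m U + ((n choose m) - alpha n m) * Hc U m False)" by simp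
  then have "real (card {f \<in> L2 n. stab n f = U}) =
     (\<Sum>m\<le>n. real (alpha n m * Fb m U + ((n choose m) - alpha n m) * Hc U m False))"
    by (simp only: of_nat_sum)
  also have "\<dots> = (\<Sum>m\<le>n. real (alpha n m) * real (Fb m U) + real_of_int (beta n m) * real (Hc U m False))"
    by (rule sum.cong[OF refl]) (simp add: beta_real of_nat_diff[OF alpha_le])
  finally show ?thesis .
qed

lemma sig_ne: "(S2_r \<in> U, S2_c \<in> U, S2_rc \<in> U) \<noteq> (S2_r \<in> V, S2_c \<in> V, S2_rc \<in> V) \<Longrightarrow> U \<noteq> V"
  by auto

lemma U_distinct: "U_1 \<noteq> U_r" "U_1 \<noteq> U_c" "U_1 \<noteq> U_rc" "U_1 \<noteq> U_S2"
  "U_r \<noteq> U_c" "U_r \<noteq> U_rc" "U_r \<noteq> U_S2" "U_c \<noteq> U_rc" "U_c \<noteq> U_S2" "U_rc \<noteq> U_S2"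
  by (rule sig_ne, simp add: U_1_def U_r_def U_c_def U_rc_def U_S2_def)+

lemma U_card: "card U_1 = 1" "card U_r = 2" "card U_c = 2" "card U_rc = 2" "card U_S2 = 4"
  by (simp_all add: U_1_def U_r_def U_c_def U_rc_def U_S2_def S2_UNIV)

lemmas U_dist = U_distinct U_distinct[THEN not_sym]

lemma int_vals: "U_1 \<inter> U_c = U_1" "U_r \<inter> U_c = U_1" "U_c \<inter> U_c = U_c" "U_rc \<inter> U_c = U_1" "U_S2 \<inter> U_c = U_c"
  by (auto simp: U_1_def U_r_def U_c_def U_rc_def U_S2_def)

lemma int_c:
  assumes "g \<in> L2 m"
  shows "stab m g \<inter> U_c = (if stab m g = U_c \<or> stab m g = U_S2 then U_c else U_1)"
  using stab_cases[OF assms] by (elim disjE) (simp_all add: int_vals U_dist)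

lemma L2bar_L2: "g \<in> L2bar m \<Longrightarrow> g \<in> L2 m" by (simp add: L2bar_def)

lemma Hc_False: "Hc U m False = card {g \<in> L2bar m. stab m g \<inter> U_c = U}"
  by (simp add: Hc_def)

lemma Hc_zero:
  assumes "U \<noteq> U_c" "U \<noteq> U_1"
  shows "Hc U m False = 0"
proof -
  have "{g \<in> L2bar m. stab m g \<inter> U_c = U} = {}"
  proof (rule set_eqI)
    fix g show "g \<in> {g \<in> L2bar m. stab m g \<inter> U_c = U} \<longleftrightarrow> g \<in> {}"
    proof (cases "g \<in> L2bar m")
      case True
      have "stab m g \<inter> U_c = U_c \<or> stab m g \<inter> U_c = U_1" using int_c[OF L2bar_L2[OF True]] by simp
      then show ?thesis using assms by auto
    qed simp
  qed
  then show ?thesis by (simp only: Hc_False card.empty)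
qed

lemma Hc_c: "Hc U_c m False = Fb m U_c + Fb m U_S2"
proof -
  have e: "{g \<in> L2bar m. stab m g \<inter> U_c = U_c} = {g \<in> L2bar m. stab m g = U_c} \<union> {g \<in> L2bar m. stab m g = U_S2}"
  proof (rule set_eqI)
    fix g show "g \<in> {g \<in> L2bar m. stab m g \<inter> U_c = U_c} \<longleftrightarrow> g \<in> {g \<in> L2bar m. stab m g = U_c} \<union> {g \<in> L2bar m. stab m g = U_S2}"
      using int_c[OF L2bar_L2, of g m] by (cases "g \<in> L2bar m") (simp_all add: U_dist)
  qed
  have d: "{g \<in> L2bar m. stab m g = U_c} \<inter> {g \<in> L2bar m. stab m g = U_S2} = {}"
    by (auto simp: U_dist)
  have "card ({g \<in> L2bar m. stab m g = U_c} \<union> {g \<in> L2bar m. stab m g = U_S2}) = Fb m U_c + Fb m U_S2"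
    unfolding Fb_def by (rule card_Un_disjoint[OF _ _ d]) (simp_all add: finite_L2bar)
  then show ?thesis by (simp only: Hc_False e)
qed

lemma Hc_1: "Hc U_1 m False = Fb m U_1 + Fb m U_r + Fb m U_rc"
proof -
  let ?A = "{g \<in> L2bar m. stab m g = U_1}"
  let ?B = "{g \<in> L2bar m. stab m g = U_r}"
  let ?C = "{g \<in> L2bar m. stab m g = U_rc}"
  have e: "{g \<in> L2bar m. stab m g \<inter> U_c = U_1} = (?A \<union> ?B) \<union> ?C"
  proof (rule set_eqI)
    fix g show "g \<in> {g \<in> L2bar m. stab m g \<inter> U_c = U_1} \<longleftrightarrow> g \<in> (?A \<union> ?B) \<union> ?C"
    proof (cases "g \<in> L2bar m")
      case True
      show ?thesis using int_c[OF L2bar_L2[OF True]] stab_cases[OF L2bar_L2[OF True]] True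
        by (elim disjE) (simp_all add: U_dist)
    qed simp
  qed
  have d1: "?A \<inter> ?B = {}" by (auto simp: U_dist)
  have d2: "(?A \<union> ?B) \<inter> ?C = {}" by (auto simp: U_dist)
  have "card ((?A \<union> ?B) \<union> ?C) = card (?A \<union> ?B) + card ?C"
    by (rule card_Un_disjoint[OF _ _ d2]) (simp_all add: finite_L2bar)
  moreover have "card (?A \<union> ?B) = card ?A + card ?B"
    by (rule card_Un_disjoint[OF _ _ d1]) (simp_all add: finite_L2bar)
  ultimately show ?thesis by (simp only: Hc_False e Fb_def)
qed

lemma tbar_rel: "real (card (tbar_cls m U)) * 4 = real (Fb m U) * real (card U)"
proof -
  have "card {orbit m f | f. f \<in> L2bar m \<and> stab m f = U} * 4 = card {f \<in> L2bar m. stab m f = U} * card U"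
    by (rule orbit_count[OF finite_L2bar _ act_L2bar]) (auto simp: L2bar_def)
  then have "real (card {orbit m f | f. f \<in> L2bar m \<and> stab m f = U} * 4) = real (card {f \<in> L2bar m. stab m f = U} * card U)"
    by (rule arg_cong)
  then show ?thesis unfolding tbar_cls_def Fb_def by simp
qed

lemma t_rel: "real (card (t_cls n U)) * 4 = real (card {f \<in> L2 n. stab n f = U}) * real (card U)"
proof -
  have "card {orbit n f | f. f \<in> L2 n \<and> stab n f = U} * 4 = card {f \<in> L2 n. stab n f = U} * card U"
    by (rule orbit_count[OF finite_L2]) (auto simp: act_L2)
  then have "real (card {orbit n f | f. f \<in> L2 n \<and> stab n f = U} * 4) = real (card {f \<in> L2 n. stab n f = U} * card U)"
    by (rule arg_cong)
  then show ?thesis unfolding t_cls_def by simp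
qed

lemma split_last: "(\<Sum>m\<le>(n::nat). f m) = (\<Sum>m<n. f m) + (f n :: real)"
  using sum.lessThan_Suc[of f n] by (simp add: lessThan_Suc_atMost)

lemma beta_nn: "beta n n = 0" by (simp add: beta_def alpha_nn)

lemma choose_real: "real (n choose m) = real (alpha n m) + real_of_int (beta n m)"
  by (simp add: beta_real)

lemma Fb_S2: "real (Fb m U_S2) = real (card (tbar_cls m U_S2))"
  using tbar_rel[of m U_S2] by (simp add: U_card)
lemma Fb_r: "real (Fb m U_r) = 2 * real (card (tbar_cls m U_r))"
  using tbar_rel[of m U_r] by (simp add: U_card)
lemma Fb_c: "real (Fb m U_c) = 2 * real (card (tbar_cls m U_c))"
  using tbar_rel[of m U_c] by (simp add: U_card)
lemma Fb_rc: "real (Fb m U_rc) = 2 * real (card (tbar_cls m U_rc))"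
  using tbar_rel[of m U_rc] by (simp add: U_card)
lemma Fb_1: "real (Fb m U_1) = 4 * real (card (tbar_cls m U_1))"
  using tbar_rel[of m U_1] by (simp add: U_card)

lemma genA:
  assumes h0: "\<And>m. Hc U m False = 0"
  shows "real (card (t_cls n U)) = (\<Sum>m\<le>n. real (alpha n m) * real (card (tbar_cls m U)))"
proof -
  have "real (card (t_cls n U)) * 4 = (\<Sum>m\<le>n. real (alpha n m) * real (Fb m U)) * real (card U)"
    using t_rel[of n U] Ff_sum[of n U] h0 by simp
  also have "\<dots> = (\<Sum>m\<le>n. real (alpha n m) * (real (Fb m U) * real (card U)))"
    by (simp add: sum_distrib_right mult.assoc)
  also have "\<dots> = (\<Sum>m\<le>n. real (alpha n m) * (real (card (tbar_cls m U)) * 4))"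
    using tbar_rel by simp
  also have "\<dots> = (\<Sum>m\<le>n. real (alpha n m) * real (card (tbar_cls m U))) * 4"
    by (simp add: sum_distrib_right mult.assoc)
  finally show ?thesis by simp
qed

lemma finishA:
  assumes "real (card (t_cls n U)) = (\<Sum>m\<le>n. real (alpha n m) * real (card (tbar_cls m U)))"
  shows "real (card (tbar_cls n U)) = real (card (t_cls n U))
      - (\<Sum>m<n. real (alpha n m) * real (card (tbar_cls m U)))"
  using assms split_last[of "\<lambda>m. real (alpha n m) * real (card (tbar_cls m U))" n] alpha_nn
  by simp

lemma part_c:
  "real (card (t_cls n U_c)) = (\<Sum>m\<le>n. real (n choose m) * real (card (tbar_cls m U_c))
                + (1/2) * real_of_int (beta n m) * real (card (tbar_cls m U_S2)))"
proof -
  have "real (card (t_cls n U_c)) * 4 =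
     (\<Sum>m\<le>n. real (alpha n m) * real (Fb m U_c) + real_of_int (beta n m) * real (Hc U_c m False)) * 2"
    using t_rel[of n U_c] Ff_sum[of n U_c] by (simp add: U_card)
  also have "\<dots> = (\<Sum>m\<le>n. real (n choose m) * real (card (tbar_cls m U_c))
                + (1/2) * real_of_int (beta n m) * real (card (tbar_cls m U_S2))) * 4"
    unfolding sum_distrib_right
    by (rule sum.cong[OF refl]) (simp add: Hc_c Fb_c Fb_S2 choose_real algebra_simps)
  finally show ?thesis by simp
qed

lemma part_1:
  "real (card (t_cls n U_1)) = (\<Sum>m\<le>n. real (n choose m) * real (card (tbar_cls m U_1))
                + (1/2) * real_of_int (beta n m)
                    * (real (card (tbar_cls m U_r)) + real (card (tbar_cls m U_rc))))"
proof -
  have "real (card (t_cls n U_1)) * 4 =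
     (\<Sum>m\<le>n. real (alpha n m) * real (Fb m U_1) + real_of_int (beta n m) * real (Hc U_1 m False))"
    using t_rel[of n U_1] Ff_sum[of n U_1] by (simp add: U_card)
  also have "\<dots> = (\<Sum>m\<le>n. real (n choose m) * real (card (tbar_cls m U_1))
                + (1/2) * real_of_int (beta n m)
                    * (real (card (tbar_cls m U_r)) + real (card (tbar_cls m U_rc)))) * 4"
    unfolding sum_distrib_right
    by (rule sum.cong[OF refl]) (simp add: Hc_1 Fb_1 Fb_r Fb_rc choose_real algebra_simps)
  finally show ?thesis by simp
qed

theorem proposition6:
  fixes n :: nat
  shows
   "(real (card (tbar_cls n U_S2)) = real (card (t_cls n U_S2))
      - (\<Sum>m<n. real (alpha n m) * real (card (tbar_cls m U_S2))))
  \<and> (real (card (tbar_cls n U_r)) = real (card (t_cls n U_r))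
      - (\<Sum>m<n. real (alpha n m) * real (card (tbar_cls m U_r))))
  \<and> (real (card (tbar_cls n U_rc)) = real (card (t_cls n U_rc))
      - (\<Sum>m<n. real (alpha n m) * real (card (tbar_cls m U_rc))))
  \<and> (real (card (tbar_cls n U_c)) = real (card (t_cls n U_c))
      - (\<Sum>m<n. real (n choose m) * real (card (tbar_cls m U_c))
                + (1/2) * real_of_int (beta n m) * real (card (tbar_cls m U_S2))))
  \<and> (real (card (tbar_cls n U_1)) = real (card (t_cls n U_1))
      - (\<Sum>m<n. real (n choose m) * real (card (tbar_cls m U_1))
                + (1/2) * real_of_int (beta n m)
                    * (real (card (tbar_cls m U_r)) + real (card (tbar_cls m U_rc)))))"
proof (intro conjI)
  show "real (card (tbar_cls n U_S2)) = real (card (t_cls n U_S2))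
      - (\<Sum>m<n. real (alpha n m) * real (card (tbar_cls m U_S2)))"
    by (rule finishA[OF genA]) (rule Hc_zero; simp add: U_dist)
  show "real (card (tbar_cls n U_r)) = real (card (t_cls n U_r))
      - (\<Sum>m<n. real (alpha n m) * real (card (tbar_cls m U_r)))"
    by (rule finishA[OF genA]) (rule Hc_zero; simp add: U_dist)
  show "real (card (tbar_cls n U_rc)) = real (card (t_cls n U_rc))
      - (\<Sum>m<n. real (alpha n m) * real (card (tbar_cls m U_rc)))"
    by (rule finishA[OF genA]) (rule Hc_zero; simp add: U_dist)
  show "real (card (tbar_cls n U_c)) = real (card (t_cls n U_c))
      - (\<Sum>m<n. real (n choose m) * real (card (tbar_cls m U_c))
                + (1/2) * real_of_int (beta n m) * real (card (tbar_cls m U_S2)))"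
    using part_c[of n] split_last[of "\<lambda>m. real (n choose m) * real (card (tbar_cls m U_c))
                + (1/2) * real_of_int (beta n m) * real (card (tbar_cls m U_S2))" n] beta_nn
    by simp
  show "real (card (tbar_cls n U_1)) = real (card (t_cls n U_1))
      - (\<Sum>m<n. real (n choose m) * real (card (tbar_cls m U_1))
                + (1/2) * real_of_int (beta n m)
                    * (real (card (tbar_cls m U_r)) + real (card (tbar_cls m U_rc))))"
    using part_1[of n] split_last[of "\<lambda>m. real (n choose m) * real (card (tbar_cls m U_1))
                + (1/2) * real_of_int (beta n m)
                    * (real (card (tbar_cls m U_r)) + real (card (tbar_cls m U_rc)))" n] beta_nn
    by simp
qed

end
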